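(* Let $k_s>0$ and $c_\sigma>0$ with $c_\sigma\neq 1$, and let $\eta$ be a random variable on $(0,\infty)$ with probability density $$f_\eta(\eta)=e^{-k_s^2}\,(1+k_s^2)\,c_\sigma\; e^{\frac{\eta k_s^2}{\eta+c_\sigma}}\;\frac{\eta+\frac{c_\sigma}{1+k_s^2}}{(\eta+c_\sigma)^3},\qquad \eta>0 .$$ Then the average channel capacity per unit bandwidth $\bar C_{h,u}=\mathbb{E}[\log_2(1+\eta)]=\int_0^\infty \log_2(1+\eta)f_\eta(\eta)\,d\eta$ equals $$\bar C_{h,u}=\frac{1}{\log 2}\left(\log\!\left(c_\sigma k_s^2\right)+E_1(k_s^2)+\zeta+\frac{e^{-\frac{c_\sigma k_s^2}{c_\sigma-1}}}{c_\sigma-1}\left(\mathrm{Ei}\!\left(\frac{c_\sigma k_s^2}{c_\sigma-1}\right)-\mathrm{Ei}\!\left(\frac{k_s^2}{c_\sigma-1}\right)\right)\right),$$ where $E_1(x)=\int_x^\infty \frac{e^{-t}}{t}\,dt$ for $x>0$, $\mathrm{Ei}(x)=-\,\mathrm{PV}\!\int_{-x}^{\infty}\frac{e^{-t}}{t}\,dt$ is the standard (principal value) exponential integral, $\zeta\approx 0.577$ is the Euler–Mascheroni constant, and $\log$ is the natural logarithm.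
   Context: Setting: a user $UE0$ is served by two cooperating antenna arrays with zero-forcing position-based joint transmit precoding over Rician channels with factor $K$; its SINR is $\eta=|x_s|^2/|x_I|^2$ with $x_s$ the signal component and $x_I$ the interference-plus-noise component. For fixed channel statistics and fixed user/interferer locations, the paper approximates $x_s$ by a complex Gaussian $\mathcal{CN}(\mu_s,\sigma_s^2)$ and $x_I$ by an independent $\mathcal{CN}(0,\sigma_I^2)$ (moment matching of Gaussian mixtures), which yields the density of $\eta$ displayed in the claim, with $k_s=|\mu_s|/\sigma_s$ (ratio of the absolute mean signal amplitude to its standard deviation) and $c_\sigma=\sigma_s^2/\sigma_I^2$ (ratio of signal variance to interference-plus-noise variance). The average channel capacity per unit bandwidth is $\mathbb{E}[\log_2(1+\eta)]$ under this density. *)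

theory Defs
  imports "HOL-Analysis.Analysis"
begin

definition E1 :: "real \<Rightarrow> real" where
  "E1 x = integral {x..} (\<lambda>t. exp (- t) / t)"

definition pv_exp_int :: "real \<Rightarrow> real" where
  "pv_exp_int a = Lim (at_right 0)
     (\<lambda>\<epsilon>. integral ({a..} - {-\<epsilon><..<\<epsilon>}) (\<lambda>t. exp (- t) / t))"

definition Ei :: "real \<Rightarrow> real" where
  "Ei x = - pv_exp_int (- x)"

definition sinr_density :: "real \<Rightarrow> real \<Rightarrow> real \<Rightarrow> real" where
  "sinr_density ks c x = exp (- ks\<^sup>2) * (1 + ks\<^sup>2) * c * exp (x * ks\<^sup>2 / (x + c))
     * (x + c / (1 + ks\<^sup>2)) / (x + c) ^ 3"

end

theory Submission
  imports Defs "HOL-Real_Asymp.Real_Asymp"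
begin

definition phi :: "real \<Rightarrow> real" where
  "phi s = (if s = 0 then 1 else (1 - exp (- s)) / s)"

lemma phi_lim0: "((\<lambda>s::real. (1 - exp (- s)) / s) \<longlongrightarrow> 1) (at 0)"
  by real_asymp

lemma isCont_phi: "isCont phi x"
proof (cases "x = 0")
  case True
  have "((\<lambda>s::real. (1 - exp (- s)) / s) \<longlongrightarrow> phi 0) (at 0)"
    using phi_lim0 by (simp add: phi_def)
  then have "(phi \<longlongrightarrow> phi 0) (at 0)"
    by (rule Lim_transform_eventually) (auto simp: eventually_at_filter phi_def)
  then show ?thesis using True by (simp add: isCont_def)
next
  case False
  have "((\<lambda>s::real. (1 - exp (- s)) / s) \<longlongrightarrow> phi x) (at x)"
    using False by (auto simp: phi_def intro!: tendsto_eq_intros)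
  moreover have "\<forall>\<^sub>F s in at x. (1 - exp (- s)) / s = phi s"
    using eventually_at_ball[of "\<bar>x\<bar>" x UNIV] False
    by (auto elim!: eventually_mono simp: phi_def dist_real_def)
  ultimately have "(phi \<longlongrightarrow> phi x) (at x)"
    by (rule Lim_transform_eventually)
  then show ?thesis by (simp add: isCont_def)
qed

lemma cont_phi: "continuous_on A phi"
  by (simp add: continuous_at_imp_continuous_on isCont_phi)

lemma cont_expphi: "continuous_on A (\<lambda>s. exp s * phi s)"
  by (intro continuous_intros cont_phi)

lemma integral_deriv_at:
  fixes f :: "real \<Rightarrow> real"
  assumes "continuous_on UNIV f" "a < x"
  shows "((\<lambda>y. integral {a..y} f) has_real_derivative f x) (at x)"
proof -
  have "((\<lambda>y. integral {a..y} f) has_real_derivative f x) (at x within {a..x+1})"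
    by (rule integral_has_real_derivative) (use assms in \<open>auto intro: continuous_on_subset\<close>)
  moreover have "at x within {a..x+1} = at x"
    using assms by (intro at_within_interior) auto
  ultimately show ?thesis by simp
qed

definition Ein :: "real \<Rightarrow> real" where "Ein x = integral {0..x} phi"
definition Ep :: "real \<Rightarrow> real" where "Ep x = integral {0..x} (\<lambda>s. exp s * phi s)"

lemma Ein_deriv: "x > 0 \<Longrightarrow> (Ein has_real_derivative phi x) (at x)"
  unfolding Ein_def by (rule integral_deriv_at) (auto simp: cont_phi)

lemma Ep_deriv: "x > 0 \<Longrightarrow> (Ep has_real_derivative exp x * phi x) (at x)"
  unfolding Ep_def by (rule integral_deriv_at[where f = "\<lambda>s. exp s * phi s"]) (auto simp: cont_expphi)

lemma Ein_right0: "(Ein \<longlongrightarrow> 0) (at_right 0)"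
proof -
  have "continuous_on {0..1} Ein" unfolding Ein_def
    by (intro indefinite_integral_continuous_1 integrable_continuous_real cont_phi)
  then have "(Ein \<longlongrightarrow> Ein 0) (at 0 within {0..1})"
    by (auto simp: continuous_on_def)
  then show ?thesis by (simp add: at_within_Icc_at_right Ein_def)
qed

lemma Ep_right0: "(Ep \<longlongrightarrow> 0) (at_right 0)"
proof -
  have "continuous_on {0..1} Ep" unfolding Ep_def
    by (intro indefinite_integral_continuous_1 integrable_continuous_real cont_expphi)
  then have "(Ep \<longlongrightarrow> Ep 0) (at 0 within {0..1})"
    by (auto simp: continuous_on_def)
  then show ?thesis by (simp add: at_within_Icc_at_right Ep_def)
qed

lemma g_integrable: fixes w :: real assumes "w > 0" shows "(\<lambda>t. exp (- t) / t) integrable_on {w..}"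
proof (rule measurable_bounded_by_integrable_imp_integrable_real[where g="\<lambda>t::real. exp (- 1 * t) / w"])
  show "(\<lambda>t. exp (- t) / t) \<in> borel_measurable (lebesgue_on {w..})"
    using assms by (intro continuous_imp_measurable_on_sets_lebesgue continuous_intros) auto
  show "(\<lambda>t. exp (- 1 * t) / w) integrable_on {w..}"
    by (intro integrable_on_divide integrable_on_exp_minus_to_infinity) auto
  show "\<bar>exp (- t) / t\<bar> \<le> exp (- 1 * t) / w" if "t \<in> {w..}" for t
    using that assms by (auto simp: field_simps)
qed auto

lemma E1_split:
  assumes "0 < v" "v \<le> w"
  shows "E1 v = integral {v..w} (\<lambda>t. exp (- t) / t) + E1 w"
proof -
  have "((\<lambda>t. exp (- t) / t) has_integral (integral {v..w} (\<lambda>t. exp (- t) / t) + E1 w)) ({v..w} \<union> {w..})"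
    unfolding E1_def
    by (intro has_integral_Un integrable_integral g_integrable integrable_continuous_real continuous_intros)
       (use assms in auto)
  moreover have "{v..w} \<union> {w..} = {v..}" using assms by auto
  ultimately show ?thesis unfolding E1_def by (simp add: integral_unique)
qed

lemma g_int_Icc:
  assumes "0 < v" "v \<le> w"
  shows "integral {v..w} (\<lambda>t. exp (- t) / t) = (ln w - Ein w) - (ln v - Ein v)"
proof -
  have "((\<lambda>t. exp (- t) / t) has_integral ((ln w - Ein w) - (ln v - Ein v))) {v..w}"
  proof (rule fundamental_theorem_of_calculus)
    show "((\<lambda>s. ln s - Ein s) has_vector_derivative exp (- t) / t) (at t within {v..w})"
      if "t \<in> {v..w}" for t
    proof -
      have t: "t > 0" using that assms by auto
      have "((\<lambda>s. ln s - Ein s) has_real_derivative (1 / t - phi t)) (at t)"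
        using t by (auto intro!: derivative_eq_intros Ein_deriv)
      moreover have "1 / t - phi t = exp (- t) / t" using t by (simp add: phi_def field_simps)
      ultimately show ?thesis
        by (auto simp: has_real_derivative_iff_has_vector_derivative intro: has_vector_derivative_at_within)
    qed
  qed (use assms in auto)
  then show ?thesis by (simp add: integral_unique)
qed

definition kappa :: real where "kappa = E1 1 - Ein 1"

lemma E1_closed_kappa: assumes "v > 0" shows "E1 v = kappa - ln v + Ein v"
proof (cases "v \<le> 1")
  case True
  show ?thesis using E1_split[OF assms True] g_int_Icc[OF assms True] by (simp add: kappa_def)
next
  case False
  show ?thesis using E1_split[of 1 v] g_int_Icc[of 1 v] False by (simp add: kappa_def)
qed

lemma exp_approx_bounds:
  fixes s :: real and n :: nat
  assumes "n > 0" "0 \<le> s" "s \<le> n"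
  shows "(1 - s / n) ^ n \<le> exp (- s)" "exp (- s) - (1 - s / n) ^ n \<le> s\<^sup>2 * exp (- s) / n"
proof -
  have n: "real n > 0" using assms by simp
  have sn: "0 \<le> s / n" "s / n \<le> 1" using assms n by (auto simp: field_simps)
  have a0: "0 \<le> 1 - s / n" using sn by simp
  have "1 - s / n \<le> exp (- (s / n))" using exp_ge_add_one_self[of "- (s / n)"] by simp
  then have "(1 - s / n) ^ n \<le> exp (- (s / n)) ^ n" by (intro power_mono a0)
  also have "exp (- (s / n)) ^ n = exp (real n * (- (s / n)))" by (rule exp_of_nat_mult[symmetric])
  also have "real n * (- (s / n)) = - s" using n by simp
  finally show 1: "(1 - s / n) ^ n \<le> exp (- s)" .
  have b0: "0 \<le> 1 + s / n" using sn by simp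
  have "1 + s / n \<le> exp (s / n)" using exp_ge_add_one_self[of "s / n"] by simp
  then have "(1 + s / n) ^ n \<le> exp (s / n) ^ n" by (intro power_mono b0)
  also have "exp (s / n) ^ n = exp (real n * (s / n))" by (rule exp_of_nat_mult[symmetric])
  also have "real n * (s / n) = s" using n by simp
  finally have 2: "(1 + s / n) ^ n \<le> exp s" .
  have "(s / n)\<^sup>2 \<le> 1" by (rule power_le_one) (use sn in auto)
  then have "1 + real n * (- ((s / n)\<^sup>2)) \<le> (1 + - ((s / n)\<^sup>2)) ^ n"
    by (intro Bernoulli_inequality) simp
  also have "(1 + - ((s / n)\<^sup>2)) = (1 - s / n) * (1 + s / n)" by (simp add: power2_eq_square algebra_simps)
  also have "((1 - s / n) * (1 + s / n)) ^ n = (1 - s / n) ^ n * (1 + s / n) ^ n" by (rule power_mult_distrib)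
  also have "\<dots> \<le> (1 - s / n) ^ n * exp s" by (intro mult_left_mono 2 zero_le_power a0)
  also have "1 + real n * (- ((s / n)\<^sup>2)) = 1 - s\<^sup>2 / n" using n by (simp add: power2_eq_square)
  finally have 3: "1 - s\<^sup>2 / n \<le> (1 - s / n) ^ n * exp s" .
  have "exp (- s) * (1 - s\<^sup>2 / n) \<le> exp (- s) * ((1 - s / n) ^ n * exp s)"
    by (intro mult_left_mono 3) auto
  also have "\<dots> = (1 - s / n) ^ n" by (simp add: exp_minus)
  finally have "exp (- s) - exp (- s) * (s\<^sup>2 / n) \<le> (1 - s / n) ^ n" by (simp add: right_diff_distrib)
  then show "exp (- s) - (1 - s / n) ^ n \<le> s\<^sup>2 * exp (- s) / n" by (simp add: mult.commute)
qed

definition psi :: "nat \<Rightarrow> real \<Rightarrow> real" where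
  "psi n s = (\<Sum>k<n. (1 - s / n) ^ k / n)"

lemma psi_integral: assumes "n > 0" shows "(psi n has_integral harm n) {0..real n}"
proof -
  have n: "real n \<noteq> 0" using assms by simp
  have "((\<lambda>s. (1 - s / n) ^ k / n) has_integral (1 / real (Suc k))) {0..real n}" for k
  proof -
    let ?F = "\<lambda>s. - ((1 - s / n) ^ (Suc k)) / real (Suc k)"
    have "((\<lambda>s. (1 - s / n) ^ k / n) has_integral (?F (real n) - ?F 0)) {0..real n}"
    proof (rule fundamental_theorem_of_calculus)
      fix t
      have d0: "((\<lambda>s. 1 - s / n) has_real_derivative (- (1 / n))) (at t within {0..real n})"
        using n by (auto intro!: derivative_eq_intros)
      have "(?F has_real_derivative (- ((1 + real k) * ((- (1 / n)) * (1 - t / n) ^ k)) / real (Suc k))) (at t within {0..real n})"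
        by (intro DERIV_cdivide DERIV_minus DERIV_power_Suc d0)
      also have "(- ((1 + real k) * ((- (1 / n)) * (1 - t / n) ^ k)) / real (Suc k)) = (1 - t / n) ^ k / n"
        by (simp add: add.commute[of 1])
      finally have "(?F has_real_derivative ((1 - t / n) ^ k / n)) (at t within {0..real n})" .
      then show "(?F has_vector_derivative ((1 - t / n) ^ k / n)) (at t within {0..real n})"
        by (simp add: has_real_derivative_iff_has_vector_derivative)
    qed simp
    then show ?thesis using n by simp
  qed
  then have "(psi n has_integral (\<Sum>k<n. 1 / real (Suc k))) {0..real n}"
    unfolding psi_def by (intro has_integral_sum) auto
  then show ?thesis by (simp add: harm_altdef divide_inverse)
qed

lemma psi_eq: assumes "n > 0" "s \<noteq> 0" shows "psi n s = (1 - (1 - s / n) ^ n) / s"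
proof -
  have n: "real n \<noteq> 0" using assms by simp
  have "1 - (1 - s / n) ^ n = (1 - (1 - s / n)) * (\<Sum>i<n. (1 - s / n) ^ i)"
    by (rule one_diff_power_eq)
  also have "(1 - (1 - s / n)) = s / n" by simp
  finally have *: "(\<Sum>i<n. (1 - s / n) ^ i) / n = (1 - (1 - s / n) ^ n) / s"
    using assms n by (simp add: field_simps)
  show ?thesis unfolding psi_def sum_divide_distrib[symmetric] by (rule *)
qed

lemma psi_0: assumes "n > 0" shows "psi n 0 = 1"
  using assms by (simp add: psi_def)

lemma phi_psi_bound:
  assumes "n > 0" "0 \<le> s" "s \<le> n"
  shows "\<bar>phi s - psi n s\<bar> \<le> s * exp (- s) / n"
proof (cases "s = 0")
  case True then show ?thesis using assms by (simp add: psi_0 phi_def)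
next
  case False
  then have s: "s > 0" using assms by simp
  have "phi s - psi n s = (exp (- s) - (1 - s / n) ^ n) / (- s)"
    using s assms by (simp add: phi_def psi_eq field_simps)
  also have "\<bar>\<dots>\<bar> = (exp (- s) - (1 - s / n) ^ n) / s"
    using exp_approx_bounds(1)[OF assms] s by simp
  also have "\<dots> \<le> (s\<^sup>2 * exp (- s) / n) / s"
    using exp_approx_bounds(2)[OF assms] s by (intro divide_right_mono) auto
  also have "\<dots> = s * exp (- s) / n" using s by (simp add: power2_eq_square)
  finally show ?thesis .
qed

lemma Ein_harm_bound:
  assumes "n > 0"
  shows "\<bar>Ein n - harm n\<bar> \<le> 1 / n"
proof -
  have int1: "phi integrable_on {0..real n}" by (intro integrable_continuous_real cont_phi)
  have int2: "psi n integrable_on {0..real n}" using psi_integral[OF assms] by blast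
  have hint: "((\<lambda>s. s * exp (- s) / n) has_integral
          ((- (real n + 1) * exp (- real n) / n) - (- (0 + 1) * exp (- 0) / n))) {0..real n}"
  proof (rule fundamental_theorem_of_calculus)
    show "((\<lambda>s. - (s + 1) * exp (- s) / n) has_vector_derivative t * exp (- t) / n) (at t within {0..real n})" for t
    proof -
      have "((\<lambda>s. - (s + 1) * exp (- s) / n) has_real_derivative
              ((- 1 * exp (- t) + (- (t + 1)) * (exp (- t) * (- 1))) / n)) (at t within {0..real n})"
        using assms by (auto intro!: derivative_eq_intros)
      also have "((- 1 * exp (- t) + (- (t + 1)) * (exp (- t) * (- 1))) / n) = t * exp (- t) / n"
        by (simp add: algebra_simps)
      finally show ?thesis by (simp add: has_real_derivative_iff_has_vector_derivative)
    qed
  qed simp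
  have "\<bar>Ein n - harm n\<bar> = norm (integral {0..real n} (\<lambda>s. phi s - psi n s))"
    using integral_diff[OF int1 int2] integral_unique[OF psi_integral[OF assms]]
    by (simp add: Ein_def)
  also have "\<dots> \<le> integral {0..real n} (\<lambda>s. s * exp (- s) / n)"
    by (rule integral_norm_bound_integral)
       (use int1 int2 hint phi_psi_bound[OF assms] in \<open>auto intro: integrable_diff\<close>)
  also have "\<dots> = (- (real n + 1) * exp (- real n) / n) - (- (0 + 1) * exp (- 0) / n)"
    by (rule integral_unique[OF hint])
  also have "\<dots> = (1 - (real n + 1) * exp (- real n)) / n"
    using assms by (simp add: field_simps)
  also have "\<dots> \<le> 1 / n" using assms by (intro divide_right_mono) auto
  finally show ?thesis .
qed

lemma E1_nat_bound: assumes "n > 0" shows "0 \<le> E1 n" "E1 n \<le> exp (- real n)"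
proof -
  have n: "real n \<ge> 1" using assms by simp
  show "0 \<le> E1 n" unfolding E1_def
    by (rule integral_nonneg) (use n g_integrable[of "real n"] in auto)
  have "E1 n \<le> integral {real n..} (\<lambda>t. exp (- 1 * t))" unfolding E1_def
    by (rule integral_le) (use n g_integrable[of "real n"] integrable_on_exp_minus_to_infinity[of 1 "real n"]
         in \<open>auto simp: divide_le_eq\<close>)
  also have "\<dots> = exp (- real n)" using has_integral_exp_minus_to_infinity[of 1 "real n"]
    by (simp add: integral_unique)
  finally show "E1 n \<le> exp (- real n)" .
qed

lemma kappa_eq: "kappa = - euler_mascheroni"
proof -
  have e: "\<forall>\<^sub>F n in sequentially. kappa = E1 (real n) - (harm n - ln (real n)) + (harm n - Ein (real n))"
    using eventually_gt_at_top[of 0]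
  proof eventually_elim
    case (elim n)
    then have "E1 (real n) = kappa - ln (real n) + Ein (real n)" by (intro E1_closed_kappa) simp
    then show ?case by simp
  qed
  have l1: "(\<lambda>n. E1 (real n)) \<longlonglongrightarrow> 0"
  proof (rule tendsto_sandwich[of "\<lambda>_. 0" _ _ "\<lambda>n. exp (- real n)"])
    show "\<forall>\<^sub>F n in sequentially. 0 \<le> E1 (real n)"
      using eventually_gt_at_top[of 0] by eventually_elim (rule E1_nat_bound(1))
    show "\<forall>\<^sub>F n in sequentially. E1 (real n) \<le> exp (- real n)"
      using eventually_gt_at_top[of 0] by eventually_elim (rule E1_nat_bound(2))
    show "(\<lambda>n. exp (- real n)) \<longlonglongrightarrow> 0" by real_asymp
  qed simp
  have l2: "(\<lambda>n. harm n - Ein (real n)) \<longlonglongrightarrow> 0"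
  proof (rule tendsto_sandwich[of "\<lambda>n. - (1 / real n)" _ _ "\<lambda>n. 1 / real n"])
    show "\<forall>\<^sub>F n in sequentially. - (1 / real n) \<le> harm n - Ein (real n)"
      using eventually_gt_at_top[of 0]
    proof eventually_elim
      case (elim n) then show ?case using Ein_harm_bound[OF elim] by (simp add: abs_le_iff)
    qed
    show "\<forall>\<^sub>F n in sequentially. harm n - Ein (real n) \<le> 1 / real n"
      using eventually_gt_at_top[of 0]
    proof eventually_elim
      case (elim n) then show ?case using Ein_harm_bound[OF elim] by (simp add: abs_le_iff)
    qed
    show "(\<lambda>n. - (1 / real n)) \<longlonglongrightarrow> 0" by real_asymp
    show "(\<lambda>n. 1 / real n) \<longlonglongrightarrow> 0" by real_asymp
  qed
  have "(\<lambda>n. E1 (real n) - (harm n - ln (real n)) + (harm n - Ein (real n))) \<longlonglongrightarrow> 0 - euler_mascheroni + 0"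
    by (intro tendsto_intros l1 l2 euler_mascheroni_LIMSEQ)
  then have "(\<lambda>n. E1 (real n) - (harm n - ln (real n)) + (harm n - Ein (real n))) \<longlonglongrightarrow> - euler_mascheroni"
    by simp
  then have "(\<lambda>n. kappa) \<longlonglongrightarrow> - euler_mascheroni"
    using tendsto_cong[OF e] by blast
  then show ?thesis by (rule LIMSEQ_const_iff[THEN iffD1])
qed

lemma E1_closed: "v > 0 \<Longrightarrow> E1 v = - euler_mascheroni - ln v + Ein v"
  using E1_closed_kappa kappa_eq by simp

lemma E1_deriv: assumes "v > 0" shows "(E1 has_real_derivative - (exp (- v) / v)) (at v)"
proof -
  have "((\<lambda>x. - euler_mascheroni - ln x + Ein x) has_real_derivative (- (1 / v) + phi v)) (at v)"
    using assms by (auto intro!: derivative_eq_intros Ein_deriv)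
  moreover have "- (1 / v) + phi v = - (exp (- v) / v)" using assms by (simp add: phi_def field_simps)
  ultimately have "((\<lambda>x. - euler_mascheroni - ln x + Ein x) has_real_derivative - (exp (- v) / v)) (at v)"
    by simp
  then show ?thesis
    by (rule has_field_derivative_transform_within_open[where S="{0<..}"]) (use assms E1_closed in auto)
qed

lemma ev_right_lt: assumes "(p::real) > 0" shows "\<forall>\<^sub>F e in at_right 0. e < p"
  using assms unfolding eventually_at_right_field by auto

lemma Ei_neg: assumes "t < 0" shows "Ei t = - E1 (- t)"
proof -
  have ev: "\<forall>\<^sub>F e in at_right 0. integral ({- t..} - {- e<..<e}) (\<lambda>s. exp (- s) / s) = E1 (- t)"
  proof -
    have "\<forall>\<^sub>F e in at_right (0::real). e < - t"
      using assms by (intro ev_right_lt) simp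
    then show ?thesis
    proof eventually_elim
      case (elim e)
      then have "{- t..} - {- e<..<e} = {- t..}" by auto
      then show ?case by (simp add: E1_def)
    qed
  qed
  have "((\<lambda>e. integral ({- t..} - {- e<..<e}) (\<lambda>s. exp (- s) / s)) \<longlongrightarrow> E1 (- t)) (at_right 0)"
    by (rule tendsto_eventually[OF ev])
  then have "pv_exp_int (- t) = E1 (- t)"
    unfolding pv_exp_int_def by (intro tendsto_Lim) auto
  then show ?thesis by (simp add: Ei_def)
qed

lemma H_deriv:
  assumes "s < 0"
  shows "((\<lambda>s. ln (- s) + Ep (- s)) has_real_derivative exp (- s) / s) (at s)"
proof -
  have d: "((\<lambda>s. Ep (- s)) has_real_derivative (exp (- s) * phi (- s)) * (- 1)) (at s)"
    by (rule DERIV_chain2[OF Ep_deriv]) (use assms in \<open>auto intro!: derivative_eq_intros\<close>)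
  have "((\<lambda>s. ln (- s) + Ep (- s)) has_real_derivative (- 1) / (- s) + (exp (- s) * phi (- s)) * (- 1)) (at s)"
    using assms by (auto intro!: derivative_eq_intros d)
  moreover have "(- 1) / (- s) + (exp (- s) * phi (- s)) * (- 1) = exp (- s) / s"
    using assms by (simp add: phi_def field_simps exp_minus)
  ultimately show ?thesis by simp
qed

lemma Ei_pos: assumes "x > 0" shows "Ei x = ln x + Ep x + euler_mascheroni"
proof -
  let ?g = "\<lambda>s::real. exp (- s) / s"
  have ev: "\<forall>\<^sub>F e in at_right 0. integral ({- x..} - {- e<..<e}) ?g
                 = Ep e + Ein e - ln x - Ep x - euler_mascheroni"
  proof -
    have "\<forall>\<^sub>F e in at_right (0::real). 0 < e \<and> e < x"
      using assms by (intro eventually_conj ev_right_lt eventually_at_right_less) auto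
    then show ?thesis
    proof eventually_elim
      case (elim e)
      then have e: "0 < e" "e < x" by auto
      have set: "{- x..} - {- e<..<e} = {- x..- e} \<union> {e..}" using e by auto
      have i1: "(?g has_integral ((ln (- (- e)) + Ep (- (- e))) - (ln (- (- x)) + Ep (- (- x))))) {- x..- e}"
      proof (rule fundamental_theorem_of_calculus)
        show "((\<lambda>s. ln (- s) + Ep (- s)) has_vector_derivative exp (- t) / t) (at t within {- x..- e})"
          if "t \<in> {- x..- e}" for t
          using H_deriv[of t] that e
          by (auto simp: has_real_derivative_iff_has_vector_derivative intro: has_vector_derivative_at_within)
      qed (use e in auto)
      have i2: "(?g has_integral E1 e) {e..}"
        unfolding E1_def using g_integrable[of e] e by (simp add: integrable_integral)
      have "(?g has_integral ((ln e + Ep e) - (ln x + Ep x) + E1 e)) ({- x..- e} \<union> {e..})"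
        using has_integral_Un[OF i1 i2] e by (simp add: negligible_empty[unfolded empty_def] )
      then have "integral ({- x..} - {- e<..<e}) ?g = (ln e + Ep e) - (ln x + Ep x) + E1 e"
        unfolding set by (simp add: integral_unique)
      also have "\<dots> = Ep e + Ein e - ln x - Ep x - euler_mascheroni"
        using E1_closed[of e] e by simp
      finally show ?case .
    qed
  qed
  have "((\<lambda>e. Ep e + Ein e - ln x - Ep x - euler_mascheroni) \<longlongrightarrow> 0 + 0 - ln x - Ep x - euler_mascheroni) (at_right 0)"
    by (intro tendsto_intros Ep_right0 Ein_right0)
  then have "((\<lambda>e. integral ({- x..} - {- e<..<e}) ?g) \<longlongrightarrow> - ln x - Ep x - euler_mascheroni) (at_right 0)"
    using tendsto_cong[OF ev] by simp
  then have "pv_exp_int (- x) = - ln x - Ep x - euler_mascheroni"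
    unfolding pv_exp_int_def by (intro tendsto_Lim) auto
  then show ?thesis by (simp add: Ei_def)
qed

lemma Ei_deriv: assumes "t \<noteq> 0" shows "(Ei has_real_derivative exp t / t) (at t)"
proof (cases "t > 0")
  case True
  have "((\<lambda>s. ln s + Ep s + euler_mascheroni) has_real_derivative 1 / t + exp t * phi t) (at t)"
    using True by (auto intro!: derivative_eq_intros Ep_deriv)
  moreover have "1 / t + exp t * phi t = exp t / t"
    using True by (simp add: phi_def field_simps exp_minus)
  ultimately have "((\<lambda>s. ln s + Ep s + euler_mascheroni) has_real_derivative exp t / t) (at t)" by simp
  then show ?thesis
    by (rule has_field_derivative_transform_within_open[where S="{0<..}"]) (use True Ei_pos in auto)
next
  case False
  then have t: "t < 0" using assms by simp
  have "((\<lambda>s. - E1 (- s)) has_real_derivative - ((- (exp (- (- t)) / (- t))) * (- 1))) (at t)"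
    by (intro DERIV_minus DERIV_chain2[OF E1_deriv]) (use t in \<open>auto intro!: derivative_eq_intros\<close>)
  moreover have "- ((- (exp (- (- t)) / (- t))) * (- 1)) = exp t / t" by simp
  ultimately have "((\<lambda>s. - E1 (- s)) has_real_derivative exp t / t) (at t)" by simp
  then show ?thesis
    by (rule has_field_derivative_transform_within_open[where S="{..<0}"]) (use t Ei_neg in auto)
qed

lemma Ei_chain:
  assumes "(f has_real_derivative f') (at x)" "f x \<noteq> 0"
  shows "((\<lambda>x. Ei (f x)) has_real_derivative exp (f x) / f x * f') (at x)"
  by (rule DERIV_chain2[OF Ei_deriv[OF assms(2)] assms(1)])

lemma E1_chain:
  assumes "(f has_real_derivative f') (at x)" "f x > 0"
  shows "((\<lambda>x. E1 (f x)) has_real_derivative - (exp (- f x) / f x) * f') (at x)"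
  by (rule DERIV_chain2[OF E1_deriv[OF assms(2)] assms(1)])

lemma dens_eq:
  fixes ks c x :: real
  assumes "c > 0" "x \<ge> 0"
  shows "sinr_density ks c x = exp (- (ks\<^sup>2 * c / (x + c))) * c * ((1 + ks\<^sup>2) * x + c) / (x + c) ^ 3"
proof -
  have xc: "x + c > 0" using assms by simp
  have a1: "1 + ks\<^sup>2 > 0" by (simp add: add_pos_nonneg)
  have "exp (- ks\<^sup>2) * exp (x * ks\<^sup>2 / (x + c)) = exp (- (ks\<^sup>2 * c / (x + c)))"
  proof -
    have "- ks\<^sup>2 + x * ks\<^sup>2 / (x + c) = - (ks\<^sup>2 * c / (x + c))"
      using xc by (simp add: field_simps)
    then show ?thesis by (simp flip: exp_add)
  qed
  moreover have "(1 + ks\<^sup>2) * (x + c / (1 + ks\<^sup>2)) = (1 + ks\<^sup>2) * x + c"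
    using a1 by (simp add: field_simps)
  moreover have "sinr_density ks c x = (exp (- ks\<^sup>2) * exp (x * ks\<^sup>2 / (x + c))) * c * ((1 + ks\<^sup>2) * (x + c / (1 + ks\<^sup>2))) / (x + c) ^ 3"
    unfolding sinr_density_def by (simp only: mult_ac)
  ultimately show ?thesis by simp
qed

definition Psi :: "real \<Rightarrow> real \<Rightarrow> real \<Rightarrow> real" where
  "Psi a c x = ln (1 + x) * (x / (x + c) * exp (- (a * c / (x + c))))
      + exp (- (c * a / (c - 1))) / (c - 1) * Ei (c * a * (x + 1) / ((c - 1) * (x + c)))
      - E1 (a * c / (x + c))"

lemma t1: fixes y x c a E :: real assumes "y \<noteq> 0"
  shows "c / y\<^sup>2 * E + E * (a * c / y\<^sup>2) * (x / y) = E * (c * y + a * c * x) / y ^ 3"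
  using assms by (simp add: field_simps power2_eq_square power3_eq_cube)
lemma t4: fixes y z d c a Z E:: real assumes "y \<noteq> 0" "z \<noteq> 0" "d \<noteq> 0" "a \<noteq> 0" "c \<noteq> 0"
  shows "Z * E / (c * a * z / (d * y)) * (a * c / y\<^sup>2) = Z * E * d / (z * y)"
  using assms by (simp add: field_simps power2_eq_square)
lemma t5: fixes y c a E:: real assumes "y \<noteq> 0" "a \<noteq> 0" "c \<noteq> 0" 
  shows "- (E / (a * c / y)) * (- (a * c / y\<^sup>2)) = E / y"
  using assms by (simp add: field_simps power2_eq_square)
lemma t6: fixes x y z E L D:: real assumes "y \<noteq> 0" "z \<noteq> 0" "z = x + 1"
  shows "(1 / z * (x / y * E) + L * D) + E / (z * y) - E / y = L * D"
proof -
  have "1 / z * (x / y * E) + E / (z * y) - E / y = E * (x + 1 - z) / (z * y)"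
    using assms(1,2) by (simp add: field_simps)
  then show ?thesis using assms(3) by simp
qed
lemma t7: fixes K Z E d w :: real assumes "d \<noteq> 0"
  shows "K / d * (Z * E * d / w) = (K * Z) * E / w"
  using assms by (simp add: field_simps)

lemma t2: fixes y z d c a :: real assumes "y \<noteq> 0" "d \<noteq> 0" "z = y - d"
  shows "c * a * z / (d * y) = c * a / d + - (a * c / y)"
proof -
  have "c * a / d + - (a * c / y) = c * a * (y - d) / (d * y)" using assms(1,2) by (simp add: field_simps)
  then show ?thesis using assms(3) by simp
qed

lemma Psi_deriv:
  fixes ks c x :: real
  assumes ks: "ks > 0" and c: "c > 0" "c \<noteq> 1" and x: "x \<ge> 0"
  shows "(Psi (ks\<^sup>2) c has_real_derivative ln (1 + x) * sinr_density ks c x) (at x)"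
proof -
  define a where "a = ks\<^sup>2"
  have a: "a > 0" using ks by (simp add: a_def)
  have xc: "x + c > 0" using c x by simp
  have b: "c - 1 \<noteq> 0" using c by simp
  define E where "E = exp (- (a * c / (x + c)))"
  have dens: "sinr_density ks c x = E * c * ((1 + a) * x + c) / (x + c) ^ 3"
    using dens_eq[OF c(1) x, of ks] by (simp add: E_def a_def mult.commute)
  have dq: "((\<lambda>x. x / (x + c)) has_real_derivative c / (x + c)\<^sup>2) (at x)"
  proof -
    have "((\<lambda>x. x / (x + c)) has_real_derivative (1 * (x + c) - x * (1 + 0)) / ((x + c) * (x + c))) (at x)"
      using xc by (intro derivative_intros) auto
    then show ?thesis by (simp add: power2_eq_square)
  qed
  have dv: "((\<lambda>x. a * c / (x + c)) has_real_derivative - (a * c / (x + c)\<^sup>2)) (at x)"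
  proof -
    have "((\<lambda>x. a * c / (x + c)) has_real_derivative (0 * (x + c) - (a * c) * (1 + 0)) / ((x + c) * (x + c))) (at x)"
      using xc by (intro derivative_intros) auto
    then show ?thesis by (simp add: power2_eq_square)
  qed
  have de: "((\<lambda>x. exp (- (a * c / (x + c)))) has_real_derivative E * (a * c / (x + c)\<^sup>2)) (at x)"
    unfolding E_def using DERIV_chain2[OF DERIV_exp DERIV_minus[OF dv]] by simp
  have dP: "((\<lambda>x. x / (x + c) * exp (- (a * c / (x + c)))) has_real_derivative sinr_density ks c x) (at x)"
  proof -
    have "((\<lambda>x. x / (x + c) * exp (- (a * c / (x + c)))) has_real_derivative
       (c / (x + c)\<^sup>2 * E + E * (a * c / (x + c)\<^sup>2) * (x / (x + c)))) (at x)"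
      using DERIV_mult[OF dq de] by (simp only: E_def)
    also have "(c / (x + c)\<^sup>2 * E + E * (a * c / (x + c)\<^sup>2) * (x / (x + c))) = E * (c * (x + c) + a * c * x) / (x + c) ^ 3"
      by (rule t1) (use xc in simp)
    also have "E * (c * (x + c) + a * c * x) / (x + c) ^ 3 = sinr_density ks c x"
      unfolding dens by (simp add: algebra_simps)
    finally show ?thesis .
  qed
  have tt_eq: "c * a * (y + 1) / ((c - 1) * (y + c)) = c * a / (c - 1) + - (a * c / (y + c))" if "y > - c" for y
    by (rule t2) (use that b in auto)
  have ttnz: "c * a * (x + 1) / ((c - 1) * (x + c)) \<noteq> 0" using a c x xc b by simp
  have dtt: "((\<lambda>x. c * a * (x + 1) / ((c - 1) * (x + c))) has_real_derivative a * c / (x + c)\<^sup>2) (at x)"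
  proof -
    have "((\<lambda>x. c * a / (c - 1) + - (a * c / (x + c))) has_real_derivative 0 + - (- (a * c / (x + c)\<^sup>2))) (at x)"
      by (intro DERIV_add DERIV_minus dv DERIV_const)
    then have "((\<lambda>x. c * a / (c - 1) + - (a * c / (x + c))) has_real_derivative a * c / (x + c)\<^sup>2) (at x)"
      by simp
    then show ?thesis
      by (rule has_field_derivative_transform_within_open[where S="{- c<..}"]) (use xc tt_eq in auto)
  qed
  have dEi: "((\<lambda>x. Ei (c * a * (x + 1) / ((c - 1) * (x + c)))) has_real_derivative
               exp (c * a / (c - 1)) * E * (c - 1) / ((x + 1) * (x + c))) (at x)"
  proof -
    have "((\<lambda>x. Ei (c * a * (x + 1) / ((c - 1) * (x + c)))) has_real_derivative
          exp (c * a * (x + 1) / ((c - 1) * (x + c))) / (c * a * (x + 1) / ((c - 1) * (x + c))) * (a * c / (x + c)\<^sup>2)) (at x)"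
      by (rule Ei_chain[OF dtt ttnz])
    also have "exp (c * a * (x + 1) / ((c - 1) * (x + c))) = exp (c * a / (c - 1)) * E"
    proof -
      have "c * a * (x + 1) / ((c - 1) * (x + c)) = c * a / (c - 1) + - (a * c / (x + c))"
        using tt_eq xc by simp
      then show ?thesis unfolding E_def by (simp only: exp_add)
    qed
    also have "exp (c * a / (c - 1)) * E / (c * a * (x + 1) / ((c - 1) * (x + c))) * (a * c / (x + c)\<^sup>2)
             = exp (c * a / (c - 1)) * E * (c - 1) / ((x + 1) * (x + c))"
      by (rule t4) (use xc b a c x in auto)
    finally show ?thesis .
  qed
  have dE1: "((\<lambda>x. E1 (a * c / (x + c))) has_real_derivative E / (x + c)) (at x)"
  proof -
    have "((\<lambda>x. E1 (a * c / (x + c))) has_real_derivative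
            - (exp (- (a * c / (x + c))) / (a * c / (x + c))) * (- (a * c / (x + c)\<^sup>2))) (at x)"
      by (rule E1_chain[OF dv]) (use a c xc in simp)
    also have "- (exp (- (a * c / (x + c))) / (a * c / (x + c))) * (- (a * c / (x + c)\<^sup>2)) = E / (x + c)"
      unfolding E_def by (rule t5) (use a c xc in auto)
    finally show ?thesis .
  qed
  have dL: "((\<lambda>x. ln (1 + x)) has_real_derivative 1 / (1 + x)) (at x)"
  proof -
    show ?thesis using x by (auto intro!: derivative_eq_intros)
  qed
  have "(Psi a c has_real_derivative
          (1 / (1 + x) * (x / (x + c) * E) + sinr_density ks c x * ln (1 + x))
          + exp (- (c * a / (c - 1))) / (c - 1) * (exp (c * a / (c - 1)) * E * (c - 1) / ((x + 1) * (x + c)))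
          - E / (x + c)) (at x)"
    unfolding Psi_def
    using DERIV_diff[OF DERIV_add[OF DERIV_mult[OF dL dP] DERIV_cmult[OF dEi]] dE1]
    by (simp only: E_def)
  also have "(1 / (1 + x) * (x / (x + c) * E) + sinr_density ks c x * ln (1 + x))
          + exp (- (c * a / (c - 1))) / (c - 1) * (exp (c * a / (c - 1)) * E * (c - 1) / ((x + 1) * (x + c)))
          - E / (x + c) = ln (1 + x) * sinr_density ks c x"
  proof -
    have k: "exp (- (c * a / (c - 1))) * exp (c * a / (c - 1)) = 1" by (simp flip: exp_add)
    have "exp (- (c * a / (c - 1))) / (c - 1) * (exp (c * a / (c - 1)) * E * (c - 1) / ((x + 1) * (x + c)))
          = (exp (- (c * a / (c - 1))) * exp (c * a / (c - 1))) * E / ((x + 1) * (x + c))"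
      by (rule t7[OF b])
    also have "\<dots> = E / ((1 + x) * (x + c))" by (simp only: k mult_1 add.commute)
    finally have *: "exp (- (c * a / (c - 1))) / (c - 1) * (exp (c * a / (c - 1)) * E * (c - 1) / ((x + 1) * (x + c)))
          = E / ((1 + x) * (x + c))" .
    show ?thesis unfolding * mult.commute[of "sinr_density ks c x"]
      by (rule t6) (use xc x in auto)
  qed
  finally show ?thesis by (simp add: a_def)
qed

lemma lim_part1:
  fixes a c :: real assumes "a > 0" "c > 0"
  shows "((\<lambda>x. ln (1 + x) * (x / (x + c) * exp (- (a * c / (x + c)))) - ln (x + c)) \<longlongrightarrow> 0) at_top"
  using assms by real_asymp

lemma lim_v:
  fixes a c :: real assumes "a > 0" "c > 0"
  shows "filterlim (\<lambda>x. a * c / (x + c)) (at_right 0) at_top"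
  using assms by real_asymp

lemma lim_v0:
  fixes a c :: real assumes "a > 0" "c > 0"
  shows "((\<lambda>x. a * c / (x + c)) \<longlongrightarrow> 0) at_top"
  using assms by real_asymp

lemma t8: fixes g l K e1 e2 E L :: real
  shows "(g + l + K * e1) / L - (K * e2 - E) / L = (1 / L) * (l + E + g + K * (e1 - e2))"
  by (simp add: divide_inverse algebra_simps)

lemma Psi_lim:
  fixes a c :: real assumes a: "a > 0" and c: "c > 0" "c \<noteq> 1"
  shows "(Psi a c \<longlongrightarrow> euler_mascheroni + ln (a * c) + exp (- (c * a / (c - 1))) / (c - 1) * Ei (c * a / (c - 1))) at_top"
proof -
  let ?K = "exp (- (c * a / (c - 1))) / (c - 1)"
  have b: "c - 1 \<noteq> 0" using c by simp
  have ev: "\<forall>\<^sub>F x in at_top. (ln (1 + x) * (x / (x + c) * exp (- (a * c / (x + c)))) - ln (x + c))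
        + ?K * Ei (c * a / (c - 1) + - (a * c / (x + c))) + euler_mascheroni + ln (a * c) - Ein (a * c / (x + c))
        = Psi a c x"
    using eventually_gt_at_top[of 0]
  proof eventually_elim
    case (elim x)
    have xc: "x + c > 0" using elim c by simp
    have v: "a * c / (x + c) > 0" using a c xc by simp
    have tt: "c * a * (x + 1) / ((c - 1) * (x + c)) = c * a / (c - 1) + - (a * c / (x + c))"
      by (rule t2) (use xc b in auto)
    have l: "ln (a * c / (x + c)) = ln (a * c) - ln (x + c)"
      using a c xc by (simp add: ln_div)
    show ?case unfolding Psi_def tt E1_closed[OF v] l by simp
  qed
  have l2: "((\<lambda>x. ?K * Ei (c * a / (c - 1) + - (a * c / (x + c)))) \<longlongrightarrow> ?K * Ei (c * a / (c - 1))) at_top"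
  proof -
    have "isCont Ei (c * a / (c - 1) + - 0)"
      by (rule DERIV_isCont[OF Ei_deriv]) (use a c b in simp)
    have "((\<lambda>x. Ei (c * a / (c - 1) + - (a * c / (x + c)))) \<longlongrightarrow> Ei (c * a / (c - 1) + - 0)) at_top"
      by (intro isCont_tendsto_compose[OF \<open>isCont Ei _\<close>] tendsto_intros lim_v0 a c)
    then show ?thesis by (intro tendsto_intros) simp
  qed
  have l3: "((\<lambda>x. Ein (a * c / (x + c))) \<longlongrightarrow> 0) at_top"
    by (rule filterlim_compose[OF Ein_right0 lim_v[OF a c(1)]])
  have "((\<lambda>x. (ln (1 + x) * (x / (x + c) * exp (- (a * c / (x + c)))) - ln (x + c))
        + ?K * Ei (c * a / (c - 1) + - (a * c / (x + c))) + euler_mascheroni + ln (a * c) - Ein (a * c / (x + c)))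
        \<longlongrightarrow> 0 + ?K * Ei (c * a / (c - 1)) + euler_mascheroni + ln (a * c) - 0) at_top"
    by (intro tendsto_intros lim_part1 a c(1) l2 l3)
  then have "(Psi a c \<longlongrightarrow> 0 + ?K * Ei (c * a / (c - 1)) + euler_mascheroni + ln (a * c) - 0) at_top"
    using tendsto_cong[OF ev] by blast
  then show ?thesis by (simp add: algebra_simps)
qed

lemma Psi_0:
  fixes a c :: real assumes a: "a > 0" and c: "c > 0" "c \<noteq> 1"
  shows "Psi a c 0 = exp (- (c * a / (c - 1))) / (c - 1) * Ei (a / (c - 1)) - E1 a"
proof -
  have "c * a * (0 + 1) / ((c - 1) * (0 + c)) = a / (c - 1)" using c by simp
  moreover have "a * c / (0 + c) = a" using c by simp
  ultimately show ?thesis unfolding Psi_def by simp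
qed

theorem theorem1:
  fixes ks c :: real
  assumes "ks > 0" and "c > 0" and "c \<noteq> 1"
  shows "((\<lambda>x. log 2 (1 + x) * sinr_density ks c x) has_integral
          (1 / ln 2) * (ln (c * ks\<^sup>2) + E1 (ks\<^sup>2) + euler_mascheroni
            + exp (- (c * ks\<^sup>2 / (c - 1))) / (c - 1)
              * (Ei (c * ks\<^sup>2 / (c - 1)) - Ei (ks\<^sup>2 / (c - 1))))) {0<..}"
proof -
  define a where "a = ks\<^sup>2"
  have a: "a > 0" using assms(1) by (simp add: a_def)
  note c = assms(2,3)
  define f where "f = (\<lambda>x. log 2 (1 + x) * sinr_density ks c x)"
  define F where "F = (\<lambda>x. Psi a c x / ln 2)"
  define A where "A = Psi a c 0 / ln 2"
  define B where "B = (euler_mascheroni + ln (a * c) + exp (- (c * a / (c - 1))) / (c - 1) * Ei (c * a / (c - 1))) / ln 2"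
  have h0: "ereal 0 < \<infinity>" by simp
  have h1: "DERIV F x :> f x" if "ereal 0 < ereal x" "ereal x < \<infinity>" for x
    proof -
      have x: "x > 0" using that by simp
      have "DERIV F x :> ln (1 + x) * sinr_density ks c x / ln 2"
        unfolding F_def a_def by (intro DERIV_cdivide Psi_deriv) (use assms x in auto)
      then show ?thesis by (simp add: f_def log_def)
    qed
  have h2: "isCont f x" if "ereal 0 < ereal x" "ereal x < \<infinity>" for x
    proof -
      have x: "x > 0" using that by simp
      show ?thesis unfolding f_def log_def sinr_density_def
        using x c by (auto intro!: continuous_intros)
    qed
  have h3: "AE x in lborel. ereal 0 < ereal x \<longrightarrow> ereal x < \<infinity> \<longrightarrow> 0 \<le> f x"
    proof (rule AE_I2, intro impI)
      fix x assume "ereal 0 < ereal x"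
      then have x: "x > 0" by simp
      have "0 \<le> log 2 (1 + x)" using x by simp
      moreover have "0 \<le> sinr_density ks c x"
        unfolding dens_eq[OF c(1) less_imp_le[OF x]] using x c
        by (intro divide_nonneg_pos mult_nonneg_nonneg add_nonneg_nonneg) auto
      ultimately show "0 \<le> f x" unfolding f_def by simp
    qed
  have hA: "((F \<circ> real_of_ereal) \<longlongrightarrow> A) (at_right (ereal 0))"
      unfolding ereal_tendsto_simps
    proof -
      have "isCont (Psi a c) 0"
        unfolding a_def by (rule DERIV_isCont[OF Psi_deriv]) (use assms in auto)
      then have "(F \<longlongrightarrow> A) (at 0)" unfolding F_def A_def isCont_def
        by (intro tendsto_intros) auto
      then show "(F \<longlongrightarrow> A) (at_right 0)" by (rule tendsto_within_subset) simp
    qed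
  have hB: "((F \<circ> real_of_ereal) \<longlongrightarrow> B) (at_left \<infinity>)"
      unfolding ereal_tendsto_simps F_def B_def
      by (intro tendsto_intros Psi_lim a c) simp
  note FTC = interval_integral_FTC_nonneg[where F = F and f = f, OF h0 h1 h2 h3 hA hB]
  have S: "einterval (ereal 0) \<infinity> = {0<..}" by simp
  have int: "f integrable_on {0<..}" and eq: "(LINT x : {0<..} | lborel. f x) = integral {0<..} f"
    using set_borel_integral_eq_integral[OF FTC(1)[unfolded S]] by auto
  have "integral {0<..} f = B - A"
    using FTC(2) eq by (simp add: interval_lebesgue_integral_def)
  also have "B - A = (1 / ln 2) * (ln (c * ks\<^sup>2) + E1 (ks\<^sup>2) + euler_mascheroni
            + exp (- (c * ks\<^sup>2 / (c - 1))) / (c - 1)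
              * (Ei (c * ks\<^sup>2 / (c - 1)) - Ei (ks\<^sup>2 / (c - 1))))"
    unfolding B_def A_def Psi_0[OF a c] t8 by (simp add: a_def mult.commute)
  finally show ?thesis using int unfolding f_def[symmetric]
    by (metis has_integral_integrable_integral)
qed

end
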